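(* Let $\Phi$ be a root system of type $A_r$ with the usual numbering of simple roots, and let $j$ be an integer with $1\le j\le \frac{r+1}{2}$. Then $$v_j(\Phi)=v_{r+1-j}(\Phi)\ge j\max(1,\log r-\log j),$$ where $\log$ is the natural logarithm.
   Context: For a reduced irreducible root system $\Phi$ with simple roots $\alpha_1,\ldots,\alpha_r$, write each positive root as $\beta=\sum_{j=1}^r a_{\beta,j}\alpha_j$ with non-negative integers $a_{\beta,j}$, and set $v_j(\Phi)=\sum_{\beta\in\Phi^+}\frac{a_{\beta,j}}{\sum_{k=1}^r a_{\beta,k}}$. For type $A_r$ with usual numbering, the positive roots are $\alpha_i+\cdots+\alpha_k$, $1\le i\le k\le r$. *)

theory Defs
  imports Complex_Main
begin

text \<open>A positive root of a root system of rank r with simple roots alpha_1..alpha_r is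
represented by its coefficient vector m \<mapsto> a_{beta,m} (m = 1..r).\<close>

definition v_index :: "nat \<Rightarrow> (nat \<Rightarrow> nat) set \<Rightarrow> nat \<Rightarrow> real" where
  "v_index r Pos j = (\<Sum>\<beta>\<in>Pos. real (\<beta> j) / real (\<Sum>k=1..r. \<beta> k))"

definition pos_roots_A :: "nat \<Rightarrow> (nat \<Rightarrow> nat) set" where
  "pos_roots_A r = {(\<lambda>m. if i \<le> m \<and> m \<le> k then 1 else 0) | i k. 1 \<le> i \<and> i \<le> k \<and> k \<le> r}"

end

theory Submission
  imports Defs
begin

definition PP :: "nat \<Rightarrow> (nat\<times>nat) set" where "PP r = {(i,k). 1\<le>i \<and> i\<le>k \<and> k\<le>r}"
definition gg :: "nat\<times>nat \<Rightarrow> nat \<Rightarrow> nat" where "gg p = (\<lambda>m. if fst p \<le> m \<and> m \<le> snd p then 1 else 0)"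

lemma pos_img: "pos_roots_A r = gg ` PP r"
proof (rule set_eqI)
  fix f show "f \<in> pos_roots_A r \<longleftrightarrow> f \<in> gg ` PP r"
  proof
    assume "f \<in> pos_roots_A r"
    then obtain i k where "1\<le>i" "i\<le>k" "k\<le>r" "f = (\<lambda>m. if i \<le> m \<and> m \<le> k then 1 else 0)"
      unfolding pos_roots_A_def by blast
    then show "f \<in> gg ` PP r" unfolding PP_def gg_def by (intro image_eqI[of _ _ "(i,k)"]) auto
  next
    assume "f \<in> gg ` PP r"
    then obtain i k where "1\<le>i" "i\<le>k" "k\<le>r" "f = gg (i,k)" unfolding PP_def by auto
    then show "f \<in> pos_roots_A r" unfolding pos_roots_A_def gg_def by auto
  qed
qed

lemma inj_gg: "inj_on gg (PP r)"
proof (rule inj_onI)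
  fix p q assume p: "p \<in> PP r" and q: "q \<in> PP r" and e: "gg p = gg q"
  obtain i k where pi: "p = (i,k)" "i \<le> k" using p unfolding PP_def by auto
  obtain i' k' where qi: "q = (i',k')" "i' \<le> k'" using q unfolding PP_def by auto
  have h: "gg p i = 1" "gg p k = 1" "gg q i' = 1" "gg q k' = 1" using pi qi by (auto simp: gg_def)
  have a: "gg q i = 1" using h(1) fun_cong[OF e, of i] by linarith
  have b: "gg q k = 1" using h(2) fun_cong[OF e, of k] by linarith
  have c: "gg p i' = 1" using h(3) fun_cong[OF e, of i'] by linarith
  have d: "gg p k' = 1" using h(4) fun_cong[OF e, of k'] by linarith
  have "i' \<le> i" using a unfolding gg_def qi(1) by (cases "i' \<le> i \<and> i \<le> k'") simp_all
  moreover have "k \<le> k'" using b unfolding gg_def qi(1) by (cases "i' \<le> k \<and> k \<le> k'") simp_all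
  moreover have "i \<le> i'" using c unfolding gg_def pi(1) by (cases "i \<le> i' \<and> i' \<le> k") simp_all
  moreover have "k' \<le> k" using d unfolding gg_def pi(1) by (cases "i \<le> k' \<and> k' \<le> k") simp_all
  ultimately have "i = i'" "k = k'" by simp_all
  then show "p = q" using pi qi by simp
qed

lemma sum_gg: assumes "p \<in> PP r" shows "(\<Sum>m=1..r. gg p m) = snd p + 1 - fst p"
proof -
  obtain i k where pi: "p = (i,k)" "1 \<le> i" "i \<le> k" "k \<le> r" using assms unfolding PP_def by auto
  have "(\<Sum>m=1..r. gg p m) = (\<Sum>m\<in>{1..r}. if m \<in> {i..k} then 1 else 0)"
    unfolding gg_def pi by (intro sum.cong) auto
  also have "\<dots> = (\<Sum>m\<in>{m\<in>{1..r}. m \<in> {i..k}}. 1)" by (subst sum.inter_filter) auto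
  also have "{m\<in>{1..r}. m \<in> {i..k}} = {i..k}" using pi by auto
  finally show ?thesis using pi by simp
qed

lemma v_eq: "v_index r (pos_roots_A r) j =
   (\<Sum>p\<in>PP r. if fst p \<le> j \<and> j \<le> snd p then 1 / real (snd p + 1 - fst p) else 0)"
  unfolding v_index_def pos_img
proof (subst sum.reindex[OF inj_gg], unfold o_def, intro sum.cong refl)
  fix p assume p: "p \<in> PP r"
  have "real (\<Sum>k = 1..r. gg p k) = real (snd p + 1 - fst p)" using sum_gg[OF p] by simp
  then show "(real (gg p j) / real (\<Sum>k = 1..r. gg p k)) = (if fst p \<le> j \<and> j \<le> snd p then 1 / real (snd p + 1 - fst p) else 0)"
    by (simp add: gg_def)
qed


definition FF :: "nat \<Rightarrow> nat \<Rightarrow> real" where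
 "FF r j = (\<Sum>p\<in>PP r. if fst p \<le> j \<and> j \<le> snd p then 1 / real (snd p + 1 - fst p) else 0)"

lemma FF_sym: assumes "j \<le> r" shows "FF r (r + 1 - j) = FF r j"
  unfolding FF_def
  by (rule sum.reindex_bij_witness[where i="\<lambda>p. (r+1 - snd p, r+1 - fst p)" and j="\<lambda>p. (r+1 - snd p, r+1 - fst p)"])
     (use assms in \<open>auto simp: PP_def\<close>)

lemma FF_double: assumes "1 \<le> j" "j \<le> r"
  shows "FF r j = (\<Sum>i=1..j. \<Sum>k=j..r. 1 / (real k + 1 - real i))"
proof -
  have "FF r j = (\<Sum>p\<in>{p\<in>PP r. fst p \<le> j \<and> j \<le> snd p}. 1 / real (snd p + 1 - fst p))"
    unfolding FF_def by (subst sum.inter_filter) (auto simp: PP_def intro: finite_subset[of _ "{0..r}\<times>{0..r}"])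
  also have "{p\<in>PP r. fst p \<le> j \<and> j \<le> snd p} = Sigma {1..j} (\<lambda>_. {j..r})"
    using assms by (auto simp: PP_def)
  also have "(\<Sum>p\<in>Sigma {1..j} (\<lambda>_. {j..r}). 1 / real (snd p + 1 - fst p)) = (\<Sum>i=1..j. \<Sum>k=j..r. 1 / real (k + 1 - i))"
    by (subst sum.Sigma) (auto simp: case_prod_beta)
  also have "\<dots> = (\<Sum>i=1..j. \<Sum>k=j..r. 1 / (real k + 1 - real i))"
    by (intro sum.cong refl) (auto simp: of_nat_diff)
  finally show ?thesis .
qed

lemma ln_step: assumes "(x::real) > 0" shows "ln ((x+1)/x) \<le> 1/x"
proof -
  have "(x+1)/x = 1 + 1/x" using assms by (simp add: field_simps)
  then show ?thesis using ln_add_one_self_le_self[of "1/x"] assms by simp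
qed

lemma ln_bound0: assumes "i \<le> j"
  shows "j \<le> r + 1 \<longrightarrow> (\<Sum>k=j..r. 1 / (real k + 1 - real i)) \<ge> ln ((real r + 2 - real i) / (real j + 1 - real i))"
proof (induction r)
  case 0
  show ?case
  proof (cases "j = 0")
    case True
    then have "i = 0" using assms by simp
    then show ?thesis using True ln_le_minus_one[of 2] by simp
  next
    case False
    then show ?thesis using assms by simp
  qed
next
  case (Suc r)
  show ?case
  proof (cases "j = r + 2")
    case True
    then have "real (Suc r) + 2 - real i = real j + 1 - real i" by simp
    then show ?thesis using True assms by simp
  next
    case False
    show ?thesis
    proof
      assume j: "j \<le> Suc r + 1"
      then have jr: "j \<le> r + 1" using False by simp
      then have eq: "{j..Suc r} = insert (Suc r) {j..r}" by auto
      have pos: "real r + 2 - real i > 0" using assms jr by simp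
      have pos2: "real j + 1 - real i > 0" using assms by simp
      have "ln ((real (Suc r) + 2 - real i) / (real j + 1 - real i))
          = ln ((real r + 2 - real i) / (real j + 1 - real i)) + ln (((real r + 2 - real i)+1) / (real r + 2 - real i))"
        using pos pos2 by (simp add: ln_div algebra_simps)
      also have "\<dots> \<le> (\<Sum>k=j..r. 1 / (real k + 1 - real i)) + 1 / (real r + 2 - real i)"
        using Suc.IH jr ln_step[OF pos] by linarith
      also have "\<dots> = (\<Sum>k=j..Suc r. 1 / (real k + 1 - real i))"
        unfolding eq by (simp add: algebra_simps)
      finally show "(\<Sum>k=j..Suc r. 1 / (real k + 1 - real i)) \<ge> ln ((real (Suc r) + 2 - real i) / (real j + 1 - real i))" .
    qed
  qed
qed

lemma ln_bound: assumes "i \<le> j" "j \<le> r + 1"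
  shows "(\<Sum>k=j..r. 1 / (real k + 1 - real i)) \<ge> ln ((real r + 2 - real i) / (real j + 1 - real i))"
  using ln_bound0[OF assms(1)] assms(2) by blast

lemma T_eq: "(\<Sum>m=1..j. \<Sum>L=m..j. 1 / real L) = real j"
proof (induction j)
  case 0 then show ?case by simp
next
  case (Suc j)
  have "(\<Sum>m=1..Suc j. \<Sum>L=m..Suc j. 1 / real L) = (\<Sum>m=1..Suc j. (\<Sum>L=m..j. 1 / real L) + 1 / real (Suc j))"
    by (intro sum.cong refl) (auto simp: atLeastAtMostSuc_conv)
  also have "\<dots> = (\<Sum>m=1..Suc j. \<Sum>L=m..j. 1 / real L) + 1"
    by (simp add: sum.distrib)
  also have "(\<Sum>m=1..Suc j. \<Sum>L=m..j. 1 / real L) = (\<Sum>m=1..j. \<Sum>L=m..j. 1 / real L)"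
    by simp
  finally show ?case using Suc.IH by simp
qed

lemma inner_reindex: assumes "1 \<le> i" "i \<le> j"
  shows "(\<Sum>k=j..j+i-1. 1 / (real k + 1 - real i)) = (\<Sum>L=j+1-i..j. 1 / real L)"
  by (rule sum.reindex_bij_witness[where i="\<lambda>L. L + i - 1" and j="\<lambda>k. k + 1 - i"])
     (use assms in \<open>auto simp: of_nat_diff\<close>)

lemma T_eq2: "(\<Sum>i=1..j. \<Sum>L=j+1-i..j. 1 / real L) = real j"
proof -
  have "(\<Sum>i=1..j. \<Sum>L=j+1-i..j. 1 / real L) = (\<Sum>m=1..j. \<Sum>L=m..j. 1 / real L)"
    by (rule sum.reindex_bij_witness[where i="\<lambda>m. j + 1 - m" and j="\<lambda>i. j + 1 - i"]) auto
  then show ?thesis using T_eq by simp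
qed

lemma FF_ge_j: assumes "1 \<le> j" "2 * j \<le> r + 1"
  shows "FF r j \<ge> real j"
proof -
  have "real j = (\<Sum>i=1..j. \<Sum>k=j..j+i-1. 1 / (real k + 1 - real i))"
  proof -
    have "(\<Sum>i=1..j. \<Sum>k=j..j+i-1. 1 / (real k + 1 - real i)) = (\<Sum>i=1..j. \<Sum>L=j+1-i..j. 1 / real L)"
      by (intro sum.cong refl inner_reindex) auto
    then show ?thesis using T_eq2 by simp
  qed
  also have "\<dots> \<le> (\<Sum>i=1..j. \<Sum>k=j..r. 1 / (real k + 1 - real i))"
  proof (intro sum_mono sum_mono2)
    fix i assume "i \<in> {1..j}"
    then show "{j..j+i-1} \<subseteq> {j..r}" using assms by auto
  next
    fix i k assume "i \<in> {1..j}" "k \<in> {j..r} - {j..j+i-1}"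
    then show "0 \<le> 1 / (real k + 1 - real i)" by auto
  qed auto
  also have "\<dots> = FF r j" using FF_double assms by simp
  finally show ?thesis .
qed

lemma FF_ge_ln: assumes "1 \<le> j" "2 * j \<le> r + 1"
  shows "FF r j \<ge> real j * (ln (real r) - ln (real j))"
proof -
  have r: "real r \<ge> real j" "real j \<ge> 1" using assms by auto
  have "real j * (ln (real r) - ln (real j)) = (\<Sum>i=1..j. ln (real r / real j))"
    using r by (simp add: ln_div)
  also have "\<dots> \<le> (\<Sum>i=1..j. ln ((real r + 2 - real i) / (real j + 1 - real i)))"
  proof (intro sum_mono)
    fix i assume i: "i \<in> {1..j}"
    then have i1: "real i \<ge> 1" "real i \<le> real j" by auto
    have p: "real j + 1 - real i > 0" using i1 by simp
    have "real r * (real j + 1 - real i) \<le> (real r + 2 - real i) * real j"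
    proof -
      have "real r * (real j + 1 - real i) - (real r + 2 - real i) * real j = (real r - real j) * (1 - real i) - real j * (real i) + real j * real i - real j"
        by (simp add: algebra_simps)
      moreover have "(real r - real j) * (1 - real i) \<le> 0" using r i1 by (intro mult_nonneg_nonpos) auto
      ultimately show ?thesis using r by linarith
    qed
    then have "real r / real j \<le> (real r + 2 - real i) / (real j + 1 - real i)"
      using p r by (simp add: divide_simps mult.commute)
    then show "ln (real r / real j) \<le> ln ((real r + 2 - real i) / (real j + 1 - real i))"
      using r p by (subst ln_le_cancel_iff) (auto intro!: divide_pos_pos)
  qed
  also have "\<dots> \<le> (\<Sum>i=1..j. \<Sum>k=j..r. 1 / (real k + 1 - real i))"
    using assms by (intro sum_mono ln_bound) auto
  also have "\<dots> = FF r j" using FF_double assms by simp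
  finally show ?thesis .
qed

theorem lemma2p2:
  fixes r j :: nat
  assumes "1 \<le> j" and "2 * j \<le> r + 1"
  shows "v_index r (pos_roots_A r) j = v_index r (pos_roots_A r) (r + 1 - j)
       \<and> v_index r (pos_roots_A r) j \<ge> real j * max 1 (ln (real r) - ln (real j))"
proof -
  have v: "\<And>j. v_index r (pos_roots_A r) j = FF r j" unfolding FF_def by (rule v_eq)
  have jr: "j \<le> r" using assms by simp
  have "real j * max 1 (ln (real r) - ln (real j)) \<le> FF r j"
  proof (cases "1 \<le> ln (real r) - ln (real j)")
    case True
    then show ?thesis using FF_ge_ln[OF assms] by (simp add: max_def)
  next
    case False
    then show ?thesis using FF_ge_j[OF assms] by (simp add: max_def)
  qed
  then show ?thesis using FF_sym[OF jr] v by simp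
qed

end
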